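(* Let $a,b\in\mathbb{N}$ with $a,b>1$, $c\in\mathbb{R}$ with $c>0$, and $h:\mathbb{N}\to(0,\infty]$ with $0<h(n)<\infty$ for all $n\in\mathbb{N}$. Consider the recurrence $$T(1)=c,\qquad T(n)=aT(n/b)+h(n)\ \text{ for } n\in\omega_b.$$ Then this recurrence has a unique solution $f_T\in\mathcal{RT}_{b,c}$. Moreover, if there exists $g\in\mathcal{RT}_{b,c}$ such that $\Phi_T$ is an improver with respect to $g$, then $f_T\in\mathcal{O}(g)$.
   Context: $\mathbb{N}$ is the set of positive integers, $\omega$ the nonnegative integers, $\omega_b=\{b^k:k\in\mathbb{N}\}$. $\mathcal{RT}$ is the set of all functions $\mathbb{N}\to(0,\infty]$, and $\mathcal{RT}_{b,c}=\{f\in\mathcal{RT}: f(1)=c \text{ and } f(n)=\infty \text{ for all } n\notin\omega_b \text{ with } n>1\}$. $\Phi_T:\mathcal{RT}_{b,c}\to\mathcal{RT}_{b,c}$ is defined by $\Phi_T(f)(1)=c$, $\Phi_T(f)(n)=\infty$ if $n\notin\omega_b$ and $n>1$, and $\Phi_T(f)(n)=af(n/b)+h(n)$ otherwise. A functional $\Phi:C\to C$ ($C\subseteq\mathcal{RT}$) is an improver with respect to $f\in C$ if $\Phi^{n+1}(f)\le\Phi^n(f)$ pointwise for all $n\in\omega$ (with $\Phi^0(f)=f$). For $f,g\in\mathcal{RT}$, $f\in\mathcal{O}(g)$ means there exist $n_0\in\mathbb{N}$ and $C\ge0$ with $f(n)\le Cg(n)$ for all $n\ge n_0$. *)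

theory Defs
  imports "HOL-Analysis.Analysis"
begin

text \<open>Functions N -> (0,\<infinity>] are modelled as nat \<Rightarrow> ereal; only arguments n \<ge> 1 matter.\<close>

definition omega_b :: "nat \<Rightarrow> nat set" where
  "omega_b b = {b ^ k | k. k \<ge> 1}"

definition RT :: "(nat \<Rightarrow> ereal) set" where
  "RT = {f. \<forall>n\<ge>1. 0 < f n}"

definition RT_bc :: "nat \<Rightarrow> real \<Rightarrow> (nat \<Rightarrow> ereal) set" where
  "RT_bc b c = {f \<in> RT. f 1 = ereal c \<and> (\<forall>n. n > 1 \<and> n \<notin> omega_b b \<longrightarrow> f n = \<infinity>)}"

definition PhiT :: "nat \<Rightarrow> nat \<Rightarrow> real \<Rightarrow> (nat \<Rightarrow> real) \<Rightarrow> (nat \<Rightarrow> ereal) \<Rightarrow> (nat \<Rightarrow> ereal)" where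
  "PhiT a b c h f = (\<lambda>n. if n = 1 then ereal c
                          else if n \<notin> omega_b b then \<infinity>
                          else ereal (real a) * f (n div b) + ereal (h n))"

definition improver :: "(nat \<Rightarrow> ereal) set \<Rightarrow> ((nat \<Rightarrow> ereal) \<Rightarrow> (nat \<Rightarrow> ereal)) \<Rightarrow> (nat \<Rightarrow> ereal) \<Rightarrow> bool" where
  "improver C Phi f \<longleftrightarrow> f \<in> C \<and> (\<forall>k. \<forall>n\<ge>1. (Phi ^^ Suc k) f n \<le> (Phi ^^ k) f n)"

definition bigO :: "(nat \<Rightarrow> ereal) \<Rightarrow> (nat \<Rightarrow> ereal) \<Rightarrow> bool" where
  "bigO f g \<longleftrightarrow> (\<exists>n0\<ge>1. \<exists>C::real. C \<ge> 0 \<and> (\<forall>n\<ge>n0. f n \<le> ereal C * g n))"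

definition solves_rec :: "nat \<Rightarrow> nat \<Rightarrow> real \<Rightarrow> (nat \<Rightarrow> real) \<Rightarrow> (nat \<Rightarrow> ereal) \<Rightarrow> bool" where
  "solves_rec a b c h f \<longleftrightarrow> f 1 = ereal c \<and>
     (\<forall>n \<in> omega_b b. f n = ereal (real a) * f (n div b) + ereal (h n))"

end

theory Submission
  imports Defs
begin

fun Fr :: "nat \<Rightarrow> nat \<Rightarrow> real \<Rightarrow> (nat\<Rightarrow>real) \<Rightarrow> nat \<Rightarrow> real" where
  "Fr a b c h 0 = c"
| "Fr a b c h (Suc k) = real a * Fr a b c h k + h (b ^ Suc k)"

definition fTd :: "nat \<Rightarrow> nat \<Rightarrow> real \<Rightarrow> (nat\<Rightarrow>real) \<Rightarrow> nat \<Rightarrow> ereal" where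
  "fTd a b c h n = (if \<exists>k. n = b ^ k then ereal (Fr a b c h (THE k. n = b ^ k)) else \<infinity>)"

lemma fTd_pow:
  assumes "b > (1::nat)"
  shows "fTd a b c h (b ^ k) = ereal (Fr a b c h k)"
proof -
  have "(THE j. b ^ k = b ^ j) = k"
    using assms by (intro the_equality) (auto simp: power_inject_exp)
  then show ?thesis unfolding fTd_def by auto
qed

lemma Fr_pos:
  assumes "a > 1" "c > 0" "\<forall>n\<ge>1. 0 < h n" "b > (1::nat)"
  shows "Fr a b c h k > 0"
proof (induction k)
  case 0 then show ?case using assms by simp
next
  case (Suc k)
  have "h (b ^ Suc k) > 0" using assms by simp
  moreover have "real a * Fr a b c h k > 0" using Suc assms by simp
  ultimately show ?case by simp
qed

lemma omega_iff:
  assumes "b > (1::nat)"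
  shows "n \<in> omega_b b \<longleftrightarrow> (\<exists>k. n = b ^ Suc k)"
proof
  assume "n \<in> omega_b b"
  then obtain k where "n = b ^ k" "k \<ge> 1" unfolding omega_b_def by blast
  then have "n = b ^ Suc (k - 1)" by simp
  then show "\<exists>k. n = b ^ Suc k" by blast
next
  assume "\<exists>k. n = b ^ Suc k"
  then obtain k where "n = b ^ Suc k" by blast
  then have "n = b ^ Suc k \<and> 1 \<le> Suc k" by simp
  then show "n \<in> omega_b b" unfolding omega_b_def by blast
qed

lemma PhiT_om: "n \<noteq> 1 \<Longrightarrow> n \<in> omega_b b \<Longrightarrow> PhiT a b c h f n = ereal (real a) * f (n div b) + ereal (h n)"
  by (simp add: PhiT_def)

lemma iter_eq:
  assumes "b > (1::nat)" "g 1 = ereal c"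
  shows "k \<le> m \<Longrightarrow> (PhiT a b c h ^^ m) g (b ^ k) = ereal (Fr a b c h k)"
proof (induction m arbitrary: k)
  case 0 then show ?case using assms by simp
next
  case (Suc m)
  show ?case
  proof (cases k)
    case 0 then show ?thesis by (simp add: PhiT_def)
  next
    case (Suc j)
    have ne: "b ^ Suc j \<noteq> 1" using assms by simp
    have om: "b ^ Suc j \<in> omega_b b" using assms omega_iff by blast
    have d: "b ^ Suc j div b = b ^ j" using assms by simp
    have "(PhiT a b c h ^^ m) g (b ^ j) = ereal (Fr a b c h j)" using Suc.IH Suc.prems Suc by simp
    moreover have "(PhiT a b c h ^^ Suc m) g (b ^ k) = PhiT a b c h ((PhiT a b c h ^^ m) g) (b ^ Suc j)"
      using Suc by simp
    moreover have "\<dots> = ereal (real a) * (PhiT a b c h ^^ m) g (b ^ j) + ereal (h (b ^ Suc j))"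
      using PhiT_om[OF ne om] d by simp
    ultimately show ?thesis using Suc by simp
  qed
qed

theorem corollary9:
  fixes a b :: nat and c :: real and h :: "nat \<Rightarrow> real"
  assumes "a > 1" and "b > 1" and "c > 0" and "\<forall>n\<ge>1. 0 < h n"
  shows "\<exists>fT \<in> RT_bc b c. solves_rec a b c h fT
           \<and> (\<forall>f \<in> RT_bc b c. solves_rec a b c h f \<longrightarrow> (\<forall>n\<ge>1. f n = fT n))
           \<and> (\<forall>g \<in> RT_bc b c. improver (RT_bc b c) (PhiT a b c h) g \<longrightarrow> bigO fT g)"
proof (intro bexI conjI ballI impI allI)
  let ?f = "fTd a b c h"
  have pow: "\<And>k. ?f (b ^ k) = ereal (Fr a b c h k)" using fTd_pow assms(2) by blast
  have notp: "\<And>n. \<not> (\<exists>k. n = b ^ k) \<Longrightarrow> ?f n = \<infinity>" unfolding fTd_def by auto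
  have pos: "\<And>k. Fr a b c h k > 0" using Fr_pos assms by blast
  have one: "?f 1 = ereal c" using pow[of 0] by simp
  show "?f \<in> RT_bc b c"
    unfolding RT_bc_def RT_def
  proof (intro CollectI conjI allI impI)
    fix n :: nat assume "1 \<le> n"
    show "0 < ?f n"
      by (cases "\<exists>k. n = b ^ k") (auto simp: pow pos notp)
  next
    show "?f 1 = ereal c" by (rule one)
  next
    fix n assume n: "1 < n \<and> n \<notin> omega_b b"
    have "\<not> (\<exists>k. n = b ^ k)"
    proof
      assume "\<exists>k. n = b ^ k"
      then obtain k where k: "n = b ^ k" by blast
      show False
      proof (cases k)
        case 0 then show False using n k by simp
      next
        case (Suc j) then show False using n k omega_iff assms(2) by blast
      qed
    qed
    then show "?f n = \<infinity>" by (rule notp)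
  qed
  show "solves_rec a b c h ?f"
    unfolding solves_rec_def
  proof (intro conjI ballI)
    show "?f 1 = ereal c" by (rule one)
    fix n assume "n \<in> omega_b b"
    then obtain k where k: "n = b ^ Suc k" using omega_iff assms(2) by blast
    have d: "n div b = b ^ k" using k assms(2) by simp
    show "?f n = ereal (real a) * ?f (n div b) + ereal (h n)"
    proof -
      have e1: "?f n = ereal (Fr a b c h (Suc k))" unfolding k by (rule pow)
      have e2: "?f (n div b) = ereal (Fr a b c h k)" unfolding d by (rule pow)
      show ?thesis by (simp only: e1 e2) (simp add: k)
    qed
  qed
  fix f assume fR: "f \<in> RT_bc b c" and sf: "solves_rec a b c h f"
  fix n :: nat assume n1: "1 \<le> n"
  have fp: "\<And>k. f (b ^ k) = ereal (Fr a b c h k)"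
  proof -
    fix k show "f (b ^ k) = ereal (Fr a b c h k)"
    proof (induction k)
      case 0 then show ?case using sf by (simp add: solves_rec_def)
    next
      case (Suc k)
      have om: "b ^ Suc k \<in> omega_b b" using assms(2) omega_iff by blast
      have d: "b ^ Suc k div b = b ^ k" using assms(2) by simp
      show ?case using sf om d Suc by (simp add: solves_rec_def)
    qed
  qed
  show "f n = ?f n"
  proof (cases "\<exists>k. n = b ^ k")
    case True then show ?thesis using fp pow by auto
  next
    case False
    have "n \<noteq> 1" proof
      assume "n = 1" then have "n = b ^ 0" by simp
      with False show False by blast
    qed
    hence "n > 1" using n1 by simp
    moreover have "n \<notin> omega_b b" using False omega_iff assms(2) by blast
    ultimately have "f n = \<infinity>" using fR by (simp add: RT_bc_def)
    then show ?thesis using False notp by simp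
  qed
next
  let ?f = "fTd a b c h"
  have pow: "\<And>k. ?f (b ^ k) = ereal (Fr a b c h k)" using fTd_pow assms(2) by blast
  have notp: "\<And>n. \<not> (\<exists>k. n = b ^ k) \<Longrightarrow> ?f n = \<infinity>" unfolding fTd_def by auto
  fix g assume gR: "g \<in> RT_bc b c" and imp: "improver (RT_bc b c) (PhiT a b c h) g"
  have g1: "g 1 = ereal c" using gR by (simp add: RT_bc_def)
  have dec: "\<And>m n. n \<ge> 1 \<Longrightarrow> (PhiT a b c h ^^ m) g n \<le> g n"
  proof -
    fix m n :: nat assume "n \<ge> 1"
    then show "(PhiT a b c h ^^ m) g n \<le> g n"
    proof (induction m)
      case 0 then show ?case by simp
    next
      case (Suc m)
      have "(PhiT a b c h ^^ Suc m) g n \<le> (PhiT a b c h ^^ m) g n"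
        using imp Suc.prems by (simp add: improver_def del: funpow.simps)
      then show ?case using Suc order_trans by blast
    qed
  qed
  have le: "\<And>n. n \<ge> 1 \<Longrightarrow> ?f n \<le> g n"
  proof -
    fix n :: nat assume n1: "n \<ge> 1"
    show "?f n \<le> g n"
    proof (cases "\<exists>k. n = b ^ k")
      case True
      then obtain k where k: "n = b ^ k" by blast
      have "(PhiT a b c h ^^ k) g (b ^ k) = ereal (Fr a b c h k)"
        using iter_eq[of b g c k k a h] assms(2) g1 by simp
      then show ?thesis using dec[OF n1, of k] k pow by simp
    next
      case False
      have "n \<noteq> 1" proof
      assume "n = 1" then have "n = b ^ 0" by simp
      with False show False by blast
    qed
      hence "n > 1" using n1 by simp
      moreover have "n \<notin> omega_b b" using False omega_iff assms(2) by blast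
      ultimately have "g n = \<infinity>" using gR by (simp add: RT_bc_def)
      then show ?thesis by simp
    qed
  qed
  show "bigO ?f g"
    unfolding bigO_def
    by (rule exI[of _ 1], simp, rule exI[of _ 1], simp add: le one_ereal_def[symmetric])
qed

end
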